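(* Let $\mu:\mathbb{R}^{n\times n}\to\mathbb{R}$ be the matrix measure induced by an orthant-monotonic norm on $\mathbb{R}^n$, and let $A\in\mathbb{R}^{n\times n}$. If $\mu(A)<0$, then every diagonal entry $a_{ii}$ of $A$ is negative.
   Context: For a vector norm $|\cdot|$ on $\mathbb{R}^n$, the induced matrix norm is $\|A\|=\max_{|x|=1}|Ax|$ and the induced matrix measure is $\mu(A)=\lim_{\varepsilon\to0^+}(\|I_n+\varepsilon A\|-1)/\varepsilon$. A norm $|\cdot|$ on $\mathbb{R}^n$ is orthant-monotonic if for all $x,y\in\mathbb{R}^n$: whenever $x_iy_i\ge 0$ and $|x_i|\le|y_i|$ for all $i$, then $|x|\le|y|$. *)

theory Defs
  imports "HOL-Analysis.Analysis"
begin

definition is_vnorm :: "(real ^ 'n \<Rightarrow> real) \<Rightarrow> bool" where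
  "is_vnorm N \<longleftrightarrow>
     (\<forall>x. 0 \<le> N x) \<and> (\<forall>x. N x = 0 \<longleftrightarrow> x = 0) \<and>
     (\<forall>c x. N (c *\<^sub>R x) = \<bar>c\<bar> * N x) \<and>
     (\<forall>x y. N (x + y) \<le> N x + N y)"

definition orthant_monotonic :: "(real ^ 'n \<Rightarrow> real) \<Rightarrow> bool" where
  "orthant_monotonic N \<longleftrightarrow>
     (\<forall>x y. (\<forall>i. x $ i * y $ i \<ge> 0 \<and> \<bar>x $ i\<bar> \<le> \<bar>y $ i\<bar>) \<longrightarrow> N x \<le> N y)"

definition induced_norm :: "(real ^ 'n \<Rightarrow> real) \<Rightarrow> real ^ 'n ^ 'n \<Rightarrow> real" where
  "induced_norm N A = Sup {N (A *v x) | x. N x = 1}"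

definition matrix_measure :: "(real ^ 'n \<Rightarrow> real) \<Rightarrow> real ^ 'n ^ 'n \<Rightarrow> real" where
  "matrix_measure N A =
     Lim (at_right 0) (\<lambda>\<epsilon>. (induced_norm N (mat 1 + \<epsilon> *\<^sub>R A) - 1) / \<epsilon>)"

end

theory Submission
  imports Defs
begin

lemma vn_basic:
  assumes "is_vnorm N"
  shows "N 0 = 0" "\<And>x. 0 \<le> N x" "\<And>x y. N (x + y) \<le> N x + N y"
    "\<And>c x. N (c *\<^sub>R x) = \<bar>c\<bar> * N x" "\<And>x. N (-x) = N x"
    "\<And>x. x \<noteq> 0 \<Longrightarrow> 0 < N x"
proof -
  show "N 0 = 0" "\<And>x. 0 \<le> N x" "\<And>x y. N (x + y) \<le> N x + N y"
    "\<And>c x. N (c *\<^sub>R x) = \<bar>c\<bar> * N x" using assms unfolding is_vnorm_def by auto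
  show "N (-x) = N x" for x
  proof -
    have "N ((-1) *\<^sub>R x) = \<bar>-1\<bar> * N x" using assms unfolding is_vnorm_def by blast
    then show ?thesis by simp
  qed
  show "x \<noteq> 0 \<Longrightarrow> 0 < N x" for x
    using assms unfolding is_vnorm_def by (simp add: order_less_le)
qed

lemma vn_sum:
  assumes "is_vnorm N" and "finite S"
  shows "N (sum f S) \<le> (\<Sum>i\<in>S. N (f i))"
  using assms(2)
proof (induction S rule: finite_induct)
  case empty then show ?case using vn_basic[OF assms(1)] by simp
next
  case (insert x F)
  then show ?case using vn_basic(3)[OF assms(1), of "f x" "sum f F"] by simp
qed

lemma vn_upper:
  fixes N :: "real ^ 'n \<Rightarrow> real"
  assumes "is_vnorm N"
  shows "\<exists>C. \<forall>x. N x \<le> C * norm x"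
proof -
  define C where "C = (\<Sum>i\<in>UNIV. N (axis i (1::real)))"
  have "N x \<le> C * norm x" for x
  proof -
    have "x = (\<Sum>i\<in>UNIV. (x $ i) *\<^sub>R axis i 1)"
      using basis_expansion[of x] by (simp add: scalar_mult_eq_scaleR)
    then have "N x \<le> (\<Sum>i\<in>UNIV. N ((x $ i) *\<^sub>R axis i (1::real)))"
      using vn_sum[OF assms, of UNIV "\<lambda>i. (x $ i) *\<^sub>R axis i (1::real)"] by simp
    also have "\<dots> = (\<Sum>i\<in>UNIV. \<bar>x $ i\<bar> * N (axis i 1))"
      using vn_basic(4)[OF assms] by simp
    also have "\<dots> \<le> (\<Sum>i\<in>UNIV. norm x * N (axis i 1))"
      by (intro sum_mono mult_right_mono component_le_norm_cart vn_basic(2)[OF assms])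
    also have "\<dots> = C * norm x" by (simp add: C_def sum_distrib_left mult.commute)
    finally show ?thesis .
  qed
  then show ?thesis by blast
qed

lemma vn_lower:
  fixes N :: "real ^ 'n \<Rightarrow> real"
  assumes "is_vnorm N"
  shows "\<exists>c>0. \<forall>x. c * norm x \<le> N x"
proof -
  obtain C where C: "\<And>x. N x \<le> C * norm x" using vn_upper[OF assms] by blast
  have lip: "\<bar>N x - N y\<bar> \<le> C * norm (x - y)" for x y
  proof -
    have "N x \<le> N y + N (x - y)" using vn_basic(3)[OF assms, of y "x - y"] by simp
    moreover have "N y \<le> N x + N (y - x)" using vn_basic(3)[OF assms, of x "y - x"] by simp
    moreover have "N (y - x) = N (x - y)" using vn_basic(5)[OF assms, of "x - y"] by simp
    ultimately show ?thesis using C[of "x - y"] by linarith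
  qed
  have C0: "0 \<le> C" using C[of "axis undefined 1"] vn_basic(2)[OF assms, of "axis undefined 1"]
    by (simp add: norm_axis_1)
  have cont: "continuous_on UNIV N"
    unfolding continuous_on_iff
  proof (intro ballI allI impI)
    fix x :: "real ^ 'n" and e :: real assume "0 < e"
    show "\<exists>d>0. \<forall>x'\<in>UNIV. dist x' x < d \<longrightarrow> dist (N x') (N x) < e"
    proof (intro exI[of _ "e / (C + 1)"] conjI ballI impI)
      show "0 < e / (C + 1)" using \<open>0 < e\<close> C0 by simp
      fix y :: "real ^ 'n" assume "dist y x < e / (C + 1)"
      then have "norm (y - x) * (C + 1) < e" using C0 by (simp add: dist_norm field_simps)
      moreover have "C * norm (y - x) \<le> norm (y - x) * (C + 1)" using C0
        by (simp add: algebra_simps)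
      ultimately show "dist (N y) (N x) < e" using lip[of y x] by (simp add: dist_real_def)
    qed
  qed
  obtain z where z: "z \<in> sphere 0 1" and zmin: "\<And>y. y \<in> sphere 0 1 \<Longrightarrow> N z \<le> N y"
  proof -
    have "axis undefined 1 \<in> sphere (0::real^'n) 1" by (simp add: norm_axis_1)
    then have "sphere (0::real^'n) 1 \<noteq> {}" by blast
    from continuous_attains_inf[OF compact_sphere this continuous_on_subset[OF cont subset_UNIV]]
    show ?thesis using that by blast
  qed
  have "z \<noteq> 0" using z by auto
  then have pos: "0 < N z" using vn_basic(6)[OF assms] by blast
  have "N z * norm x \<le> N x" for x
  proof (cases "x = 0")
    case True then show ?thesis using vn_basic(1)[OF assms] by simp
  next
    case False
    then have "(1 / norm x) *\<^sub>R x \<in> sphere 0 1" by simp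
    then have "N z \<le> N ((1 / norm x) *\<^sub>R x)" by (rule zmin)
    also have "\<dots> = N x / norm x" using vn_basic(4)[OF assms] by simp
    finally show ?thesis using False by (simp add: field_simps)
  qed
  then show ?thesis using pos by blast
qed


lemma mat_bound:
  fixes N :: "real ^ 'n \<Rightarrow> real" and B :: "real ^ 'n ^ 'n"
  assumes "is_vnorm N"
  shows "\<exists>K. \<forall>x. N (B *v x) \<le> K * N x"
proof -
  obtain C where C: "\<And>x. N x \<le> C * norm x" using vn_upper[OF assms] by blast
  obtain c where c: "c > 0" "\<And>x. c * norm x \<le> N x" using vn_lower[OF assms] by blast
  have bl: "bounded_linear ((*v) B)"
    by (simp add: linear_conv_bounded_linear matrix_vector_mul_linear)
  obtain Kb where Kb: "\<And>x. norm (B *v x) \<le> norm x * Kb"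
    using bounded_linear.bounded[OF bl] by blast
  have "N (B *v x) \<le> (\<bar>C\<bar> * \<bar>Kb\<bar> / c) * N x" for x
  proof -
    have "N (B *v x) \<le> \<bar>C\<bar> * norm (B *v x)"
      using C[of "B *v x"] by (meson abs_ge_self mult_right_mono norm_ge_zero order_trans)
    also have "\<dots> \<le> \<bar>C\<bar> * (norm x * \<bar>Kb\<bar>)"
    proof (intro mult_left_mono)
      have "norm x * Kb \<le> norm x * \<bar>Kb\<bar>" by (intro mult_left_mono) auto
      then show "norm (B *v x) \<le> norm x * \<bar>Kb\<bar>" using Kb[of x] by linarith
    qed auto
    also have "norm x \<le> N x / c" using c by (simp add: field_simps mult.commute)
    then have "\<bar>C\<bar> * (norm x * \<bar>Kb\<bar>) \<le> \<bar>C\<bar> * (N x / c * \<bar>Kb\<bar>)"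
      by (intro mult_left_mono mult_right_mono) auto
    finally show ?thesis by (simp add: field_simps)
  qed
  then show ?thesis by blast
qed

lemma unit_exists:
  fixes N :: "real ^ 'n \<Rightarrow> real"
  assumes "is_vnorm N"
  shows "\<exists>x. N x = 1"
proof -
  have ne: "axis undefined (1::real) \<noteq> (0::real^'n)" by (simp add: axis_eq_0_iff)
  then have p: "0 < N (axis undefined (1::real) :: real^'n)" using vn_basic(6)[OF assms] by blast
  have "N ((1 / N (axis undefined 1)) *\<^sub>R (axis undefined (1::real) :: real^'n)) = 1"
    using p vn_basic(4)[OF assms] by simp
  then show ?thesis by blast
qed

lemma ind_bdd:
  fixes N :: "real ^ 'n \<Rightarrow> real" and B :: "real ^ 'n ^ 'n"
  assumes "is_vnorm N"
  shows "bdd_above {N (B *v x) | x. N x = 1}" "{N (B *v x) | x. N x = 1} \<noteq> {}"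
proof -
  obtain K where K: "\<And>x. N (B *v x) \<le> K * N x" using mat_bound[OF assms] by blast
  show "bdd_above {N (B *v x) | x. N x = 1}"
    unfolding bdd_above_def
  proof (intro exI[of _ K] ballI)
    fix y assume "y \<in> {N (B *v x) | x. N x = 1}"
    then obtain x where "y = N (B *v x)" "N x = 1" by blast
    then show "y \<le> K" using K[of x] by simp
  qed
  show "{N (B *v x) | x. N x = 1} \<noteq> {}" using unit_exists[OF assms] by blast
qed

lemma ind_ge:
  assumes "is_vnorm N" "N x = 1"
  shows "N (B *v x) \<le> induced_norm N B"
  unfolding induced_norm_def using assms ind_bdd[OF assms(1), of B]
  by (intro cSup_upper) auto

lemma ind_least:
  assumes "is_vnorm N" "\<And>x. N x = 1 \<Longrightarrow> N (B *v x) \<le> K"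
  shows "induced_norm N B \<le> K"
  unfolding induced_norm_def using assms ind_bdd[OF assms(1), of B]
  by (intro cSup_least) auto

lemma ind_I:
  assumes "is_vnorm N"
  shows "induced_norm N (mat 1) = 1"
proof -
  have "{N (mat 1 *v x) | x. N x = 1} = {1}" using unit_exists[OF assms] by auto
  then show ?thesis unfolding induced_norm_def by simp
qed

lemma ind_comb:
  assumes "is_vnorm N" "0 \<le> s" "0 \<le> t"
  shows "induced_norm N (s *\<^sub>R B + t *\<^sub>R D) \<le> s * induced_norm N B + t * induced_norm N D"
proof (rule ind_least[OF assms(1)])
  fix x assume x: "N x = 1"
  have "N ((s *\<^sub>R B + t *\<^sub>R D) *v x) = N (s *\<^sub>R (B *v x) + t *\<^sub>R (D *v x))"
    by (simp add: matrix_vector_mult_add_rdistrib scaleR_matrix_vector_assoc)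
  also have "\<dots> \<le> N (s *\<^sub>R (B *v x)) + N (t *\<^sub>R (D *v x))" using vn_basic(3)[OF assms(1)] by blast
  also have "\<dots> = s * N (B *v x) + t * N (D *v x)" using vn_basic(4)[OF assms(1)] assms by simp
  also have "\<dots> \<le> s * induced_norm N B + t * induced_norm N D"
    using ind_ge[OF assms(1) x] assms by (intro add_mono mult_left_mono) auto
  finally show "N ((s *\<^sub>R B + t *\<^sub>R D) *v x) \<le> s * induced_norm N B + t * induced_norm N D" .
qed


lemma diag_lower:
  fixes N :: "real ^ 'n \<Rightarrow> real" and A :: "real ^ 'n ^ 'n"
  assumes N: "is_vnorm N" and om: "orthant_monotonic N"
    and e: "0 < e" and pos: "0 < 1 + e * A $ i $ i"
  shows "1 + e * A $ i $ i \<le> induced_norm N (mat 1 + e *\<^sub>R A)"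
proof -
  define u :: "real ^ 'n" where "u = axis i 1"
  have "u \<noteq> 0" by (simp add: u_def axis_eq_0_iff)
  then have nu: "0 < N u" using vn_basic(6)[OF N] by blast
  define x where "x = (1 / N u) *\<^sub>R u"
  have x1: "N x = 1" using nu vn_basic(4)[OF N] by (simp add: x_def)
  define z where "z = (mat 1 + e *\<^sub>R A) *v x"
  have zc: "z $ j = (1 / N u) * ((if j = i then 1 else 0) + e * A $ j $ i)" for j
  proof -
    have xc: "x $ k = (if k = i then 1 / N u else 0)" for k by (simp add: x_def u_def axis_def)
    have f1: "(\<lambda>k. A $ j $ k * x $ k) = (\<lambda>k. if k = i then A $ j $ i * (1 / N u) else 0)"
      by (auto simp: xc)
    have Ax: "(A *v x) $ j = A $ j $ i * (1 / N u)"
      unfolding matrix_vector_mult_def vec_lambda_beta f1 by simp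
    have "z = x + e *\<^sub>R (A *v x)"
      by (simp add: z_def matrix_vector_mult_add_rdistrib scaleR_matrix_vector_assoc)
    then have "z $ j = x $ j + e * (A *v x) $ j" by simp
    then show ?thesis by (simp add: Ax xc algebra_simps)
  qed
  define y where "y = ((1 + e * A $ i $ i) / N u) *\<^sub>R u"
  have yc: "y $ j = (if j = i then (1 + e * A $ i $ i) / N u else 0)" for j
    by (simp add: y_def u_def axis_def)
  have "\<forall>j. 0 \<le> y $ j * z $ j \<and> \<bar>y $ j\<bar> \<le> \<bar>z $ j\<bar>"
    using nu pos by (auto simp: yc zc)
  then have "N y \<le> N z" using om unfolding orthant_monotonic_def by blast
  moreover have "N y = 1 + e * A $ i $ i"
    using nu pos vn_basic(4)[OF N] by (simp add: y_def)
  moreover have "N z \<le> induced_norm N (mat 1 + e *\<^sub>R A)"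
    unfolding z_def by (rule ind_ge[OF N x1])
  ultimately show ?thesis by linarith
qed

theorem proposition2:
  fixes N :: "real ^ 'n \<Rightarrow> real" and A :: "real ^ 'n ^ 'n"
  assumes "is_vnorm N" and "orthant_monotonic N"
    and "matrix_measure N A < 0"
  shows "\<forall>i. A $ i $ i < 0"
proof
  fix i
  note N = assms(1)
  define g where "g e = induced_norm N (mat 1 + e *\<^sub>R A)" for e
  define f where "f e = (g e - 1) / e" for e
  have mono: "f a \<le> f b" if "0 < a" "a \<le> b" for a b
  proof -
    have b: "0 < b" using that by simp
    have eq: "mat 1 + a *\<^sub>R A = (a / b) *\<^sub>R (mat 1 + b *\<^sub>R A) + (1 - a / b) *\<^sub>R mat 1"
      using b by (simp add: algebra_simps)
    have "g a \<le> (a / b) * g b + (1 - a / b) * induced_norm N (mat 1)"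
      unfolding g_def eq using that b by (intro ind_comb[OF N]) auto
    then have "g a \<le> (a / b) * g b + (1 - a / b)" using ind_I[OF N] by simp
    then have "g a - 1 \<le> (a / b) * (g b - 1)" by (simp add: algebra_simps)
    then have "(g a - 1) / a \<le> ((a / b) * (g b - 1)) / a"
      using that by (intro divide_right_mono) auto
    also have "\<dots> = (g b - 1) / b" using that by simp
    finally show ?thesis by (simp add: f_def)
  qed
  have bnd: "- induced_norm N (- A) \<le> f a" if "0 < a" for a
  proof -
    have eq: "mat 1 = 1 *\<^sub>R (mat 1 + a *\<^sub>R A) + a *\<^sub>R (- A)" by (simp add: algebra_simps)
    have "induced_norm N (mat 1) \<le> 1 * g a + a * induced_norm N (- A)"
      unfolding g_def using that by (subst eq, intro ind_comb[OF N]) auto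
    then have "1 - g a \<le> a * induced_norm N (- A)" using ind_I[OF N] by simp
    then have "- induced_norm N (- A) * a \<le> g a - 1" by (simp add: algebra_simps)
    then show ?thesis using that by (simp add: f_def field_simps)
  qed
  have lim: "(f \<longlongrightarrow> Inf (f ` ({0<..} \<inter> UNIV))) (at (0::real) within ({0<..} \<inter> UNIV))"
    by (rule Lim_right_bound[where K = "- induced_norm N (- A)"]) (auto intro: mono bnd)
  then have lim': "(f \<longlongrightarrow> Inf (f ` {0<..})) (at_right 0)" by simp
  have "matrix_measure N A = Inf (f ` {0<..})"
    unfolding matrix_measure_def using lim' unfolding f_def g_def
    by (intro tendsto_Lim) auto
  have ev: "\<forall>\<^sub>F e in at_right 0. 0 < 1 + e * A $ i $ i"
  proof -
    have "((\<lambda>e. 1 + e * A $ i $ i) \<longlongrightarrow> 1 + 0 * A $ i $ i) (at_right (0::real))"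
      by (intro tendsto_intros)
    then show ?thesis by (rule order_tendstoD) simp
  qed
  have ev2: "\<forall>\<^sub>F e in at_right 0. A $ i $ i \<le> f e"
    using ev eventually_at_right_less[of "0::real"]
  proof eventually_elim
    case (elim e)
    have "1 + e * A $ i $ i \<le> g e" unfolding g_def
      using diag_lower[OF N assms(2) elim(2) elim(1)] .
    then have "e * A $ i $ i \<le> g e - 1" by simp
    then show ?case using elim(2) by (simp add: f_def field_simps)
  qed
  have "A $ i $ i \<le> Inf (f ` {0<..})"
    by (rule tendsto_lowerbound[OF lim' ev2]) simp
  then show "A $ i $ i < 0" using assms(3) \<open>matrix_measure N A = _\<close> by simp
qed

end
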